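(* Let $\mathcal{G}_1$ and $\mathcal{G}_2$ be reaction networks in $\mathbb{R}^d$. Then $\mathcal{G}_2\sqsubseteq\mathcal{G}_1$ if and only if (i) $\mathcal{SC}_{\mathcal{G}_2}\subset\mathcal{SC}_{\mathcal{G}_1}$, and (ii) for every $\mathbf{s}\in\mathcal{SC}_{\mathcal{G}_1}$, $\mathrm{RelInt}(V^{\mathcal{G}_2}(\mathbf{s}))\subseteq\mathrm{RelInt}(V^{\mathcal{G}_1}(\mathbf{s}))$, where $V^{\mathcal{G}}(\mathbf{s})=\{\mathbf{0}\}$ if $\mathbf{s}\notin\mathcal{SC}_{\mathcal{G}}$.
   Context: A reaction network (E-graph) $\mathcal{G}=(\mathcal{V},\mathcal{E})$ is a finite directed graph whose nodes are distinct elements of a finite set $Y\subset\mathbb{R}^d_{\ge 0}$, with $\mathcal{V}\neq\emptyset$, every node incident to at least one edge, and no edge from a node to itself. For an edge $e$, $\mathbf{s}(e)$ is its source node, $\mathbf{t}(e)$ its target node, and $\mathbf{v}(e)=\mathbf{t}(e)-\mathbf{s}(e)$. Given positive rate constants $\mathcal{K}=(k_e)_{e\in\mathcal{E}}$, $\mathcal{G}$ generates $\mathbf{f}_{\mathcal{G}(\mathcal{K})}(\mathbf{x})=\sum_{e\in\mathcal{E}}k_e\mathbf{x}^{\mathbf{s}(e)}\mathbf{v}(e)$, with $\mathbf{x}^{\mathbf{y}}=\prod_i x_i^{y_i}$, $0^0=1$. We write $\mathcal{G}_2\sqsubseteq\mathcal{G}_1$ if for every choice of positive rate constants $\mathcal{K}_2$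 for $\mathcal{G}_2$ there exist positive rate constants $\mathcal{K}_1$ for $\mathcal{G}_1$ with $\mathbf{f}_{\mathcal{G}_1(\mathcal{K}_1)}(\mathbf{x})=\mathbf{f}_{\mathcal{G}_2(\mathcal{K}_2)}(\mathbf{x})$ for all $\mathbf{x}$. $\mathcal{SC}_{\mathcal{G}}=\{\mathbf{s}(e):e\in\mathcal{E}\}$ is the set of source complexes. For $\mathbf{s}\in\mathcal{SC}_{\mathcal{G}}$, $V^{\mathcal{G}}(\mathbf{s})$ is the cone (set of all nonnegative linear combinations) generated by $\{\mathbf{v}(e):e\in\mathcal{E},\mathbf{s}(e)=\mathbf{s}\}$. $\mathrm{RelInt}(K)$ denotes the interior of a cone $K$ relative to its linear span. *)

theory Defs
  imports "HOL-Analysis.Analysis"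
begin

type_synonym 'd cplx = "real ^ 'd"
type_synonym 'd edge = "'d cplx \<times> 'd cplx"   (* (source, target) *)

definition nonneg_orthant :: "'d::finite cplx set" where
  "nonneg_orthant = {x. \<forall>i. x $ i \<ge> 0}"

definition reaction_network :: "'d::finite cplx set \<Rightarrow> 'd edge set \<Rightarrow> bool" where
  "reaction_network V E \<longleftrightarrow>
     finite V \<and> V \<noteq> {} \<and> V \<subseteq> nonneg_orthant \<and> E \<subseteq> V \<times> V \<and>
     (\<forall>e\<in>E. fst e \<noteq> snd e) \<and>
     (\<forall>y\<in>V. \<exists>e\<in>E. fst e = y \<or> snd e = y)"

(* x^y = prod_i x_i^{y_i} with the convention 0^0 = 1 *)
definition monom :: "'d::finite cplx \<Rightarrow> 'd cplx \<Rightarrow> real" where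
  "monom x y = (\<Prod>i\<in>UNIV. if y $ i = 0 then 1 else (x $ i) powr (y $ i))"

definition rn_field :: "'d::finite edge set \<Rightarrow> ('d edge \<Rightarrow> real) \<Rightarrow> 'd cplx \<Rightarrow> 'd cplx" where
  "rn_field E K x = (\<Sum>e\<in>E. (K e * monom x (fst e)) *\<^sub>R (snd e - fst e))"

definition pos_rates :: "'d::finite edge set \<Rightarrow> ('d edge \<Rightarrow> real) \<Rightarrow> bool" where
  "pos_rates E K \<longleftrightarrow> (\<forall>e\<in>E. K e > 0)"

definition realizable_in :: "'d::finite edge set \<Rightarrow> 'd edge set \<Rightarrow> bool" where
  "realizable_in E2 E1 \<longleftrightarrow>
     (\<forall>K2. pos_rates E2 K2 \<longrightarrow>
        (\<exists>K1. pos_rates E1 K1 \<and> (\<forall>x\<in>nonneg_orthant. rn_field E1 K1 x = rn_field E2 K2 x)))"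

definition source_complexes :: "'d::finite edge set \<Rightarrow> 'd cplx set" where
  "source_complexes E = fst ` E"

definition nonneg_cone :: "'d::finite cplx set \<Rightarrow> 'd cplx set" where
  "nonneg_cone S = {\<Sum>v\<in>S. c v *\<^sub>R v | c. \<forall>v\<in>S. c v \<ge> 0}"

definition reaction_cone :: "'d::finite edge set \<Rightarrow> 'd cplx \<Rightarrow> 'd cplx set" where
  "reaction_cone E s =
     (if s \<in> source_complexes E then nonneg_cone {snd e - fst e | e. e \<in> E \<and> fst e = s}
      else {0})"

end

theory Submission
  imports Defs
begin

definition pos_cone :: "'d::finite cplx set \<Rightarrow> 'd cplx set" where
  "pos_cone S = {\<Sum>v\<in>S. c v *\<^sub>R v | c. \<forall>v\<in>S. c v > 0}"

lemma nonneg_cone_empty: "nonneg_cone {} = {0}"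
  by (auto simp: nonneg_cone_def)

lemma pos_cone_empty: "pos_cone {} = {0}"
  by (auto simp: pos_cone_def)

lemma nonneg_cone_insert:
  assumes "finite T" "v \<notin> T"
  shows "nonneg_cone (insert v T) = (\<lambda>c. c *\<^sub>R v) ` {0..} + nonneg_cone T"
proof
  show "nonneg_cone (insert v T) \<subseteq> (\<lambda>c. c *\<^sub>R v) ` {0..} + nonneg_cone T"
  proof
    fix x assume "x \<in> nonneg_cone (insert v T)"
    then obtain c where x: "x = (\<Sum>w\<in>insert v T. c w *\<^sub>R w)" and c: "\<forall>w\<in>insert v T. c w \<ge> 0"
      by (auto simp: nonneg_cone_def)
    have "x = c v *\<^sub>R v + (\<Sum>w\<in>T. c w *\<^sub>R w)" using x assms by simp
    moreover have "(\<Sum>w\<in>T. c w *\<^sub>R w) \<in> nonneg_cone T" using c by (auto simp: nonneg_cone_def)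
    moreover have "c v *\<^sub>R v \<in> (\<lambda>c. c *\<^sub>R v) ` {0..}" using c by auto
    ultimately show "x \<in> (\<lambda>c. c *\<^sub>R v) ` {0..} + nonneg_cone T"
      by (metis set_plus_intro)
  qed
next
  show "(\<lambda>c. c *\<^sub>R v) ` {0..} + nonneg_cone T \<subseteq> nonneg_cone (insert v T)"
  proof
    fix x assume "x \<in> (\<lambda>c. c *\<^sub>R v) ` {0..} + nonneg_cone T"
    then obtain a c where x: "x = a *\<^sub>R v + (\<Sum>w\<in>T. c w *\<^sub>R w)" and a: "a \<ge> 0"
        and c: "\<forall>w\<in>T. c w \<ge> 0"
      by (auto simp: set_plus_def nonneg_cone_def)
    define c' where "c' = c(v := a)"
    have "(\<Sum>w\<in>T. c' w *\<^sub>R w) = (\<Sum>w\<in>T. c w *\<^sub>R w)"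
      using assms by (intro sum.cong) (auto simp: c'_def)
    then have "x = (\<Sum>w\<in>insert v T. c' w *\<^sub>R w)" using x assms by (simp add: c'_def)
    moreover have "\<forall>w\<in>insert v T. c' w \<ge> 0" using a c by (auto simp: c'_def)
    ultimately show "x \<in> nonneg_cone (insert v T)" by (auto simp: nonneg_cone_def)
  qed
qed

lemma pos_cone_insert:
  assumes "finite T" "v \<notin> T"
  shows "pos_cone (insert v T) = (\<lambda>c. c *\<^sub>R v) ` {0<..} + pos_cone T"
proof
  show "pos_cone (insert v T) \<subseteq> (\<lambda>c. c *\<^sub>R v) ` {0<..} + pos_cone T"
  proof
    fix x assume "x \<in> pos_cone (insert v T)"
    then obtain c where x: "x = (\<Sum>w\<in>insert v T. c w *\<^sub>R w)" and c: "\<forall>w\<in>insert v T. c w > 0"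
      by (auto simp: pos_cone_def)
    have "x = c v *\<^sub>R v + (\<Sum>w\<in>T. c w *\<^sub>R w)" using x assms by simp
    moreover have "(\<Sum>w\<in>T. c w *\<^sub>R w) \<in> pos_cone T" using c by (auto simp: pos_cone_def)
    moreover have "c v *\<^sub>R v \<in> (\<lambda>c. c *\<^sub>R v) ` {0<..}" using c by auto
    ultimately show "x \<in> (\<lambda>c. c *\<^sub>R v) ` {0<..} + pos_cone T"
      by (metis set_plus_intro)
  qed
next
  show "(\<lambda>c. c *\<^sub>R v) ` {0<..} + pos_cone T \<subseteq> pos_cone (insert v T)"
  proof
    fix x assume "x \<in> (\<lambda>c. c *\<^sub>R v) ` {0<..} + pos_cone T"
    then obtain a c where x: "x = a *\<^sub>R v + (\<Sum>w\<in>T. c w *\<^sub>R w)" and a: "a > 0"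
        and c: "\<forall>w\<in>T. c w > 0"
      by (auto simp: set_plus_def pos_cone_def)
    define c' where "c' = c(v := a)"
    have "(\<Sum>w\<in>T. c' w *\<^sub>R w) = (\<Sum>w\<in>T. c w *\<^sub>R w)"
      using assms by (intro sum.cong) (auto simp: c'_def)
    then have "x = (\<Sum>w\<in>insert v T. c' w *\<^sub>R w)" using x assms by (simp add: c'_def)
    moreover have "\<forall>w\<in>insert v T. c' w > 0" using a c by (auto simp: c'_def)
    ultimately show "x \<in> pos_cone (insert v T)" by (auto simp: pos_cone_def)
  qed
qed

lemma rel_interior_ray:
  "rel_interior ((\<lambda>c. c *\<^sub>R (v::'d::finite cplx)) ` {0..}) = (\<lambda>c. c *\<^sub>R v) ` {0<..}"
proof -
  have "linear (\<lambda>c::real. c *\<^sub>R v)" by (simp add: linear_scaleR_left)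
  from rel_interior_convex_linear_image[OF this, of "{0..}"]
  show ?thesis by simp
qed

lemma rel_interior_nonneg_cone:
  fixes T :: "'d::finite cplx set"
  assumes "finite T"
  shows "convex (nonneg_cone T) \<and> rel_interior (nonneg_cone T) = pos_cone T"
  using assms
proof (induction T rule: finite_induct)
  case empty
  then show ?case by (simp add: nonneg_cone_empty pos_cone_empty)
next
  case (insert v T)
  have cr: "convex ((\<lambda>c. c *\<^sub>R v) ` {0..})"
    by (intro convex_linear_image) (auto simp: linear_scaleR_left)
  show ?case
    using insert cr
    by (simp add: nonneg_cone_insert pos_cone_insert rel_interior_sum rel_interior_ray convex_set_plus)
qed

lemma exp_neg_lim: "(a::real) < 0 \<Longrightarrow> ((\<lambda>r. exp (a * r)) \<longlongrightarrow> 0) at_top"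
proof -
  assume a: "a < 0"
  have "filterlim (\<lambda>r. a * r) at_bot at_top"
    using a by (simp add: filterlim_tendsto_neg_mult_at_bot[OF tendsto_const] filterlim_ident)
  then show ?thesis using exp_at_bot filterlim_compose by blast
qed

lemma exp_indep:
  fixes c :: "real \<Rightarrow> 'a::real_normed_vector"
  assumes "finite L"
  shows "(\<forall>r. (\<Sum>l\<in>L. exp (l*r) *\<^sub>R c l) = 0) \<longrightarrow> (\<forall>l\<in>L. c l = 0)"
  using assms
proof (induction L rule: finite_linorder_max_induct)
  case empty
  then show ?case by simp
next
  case (insert b A)
  show ?case
  proof
    assume H: "\<forall>r. (\<Sum>l\<in>insert b A. exp (l*r) *\<^sub>R c l) = 0"
    have bA: "b \<notin> A" using insert by auto
    have H2: "c b + (\<Sum>l\<in>A. exp ((l - b)*r) *\<^sub>R c l) = 0" for r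
    proof -
      have "exp (b*r) *\<^sub>R c b + (\<Sum>l\<in>A. exp (l*r) *\<^sub>R c l) = 0"
        using H bA insert.hyps(1) by simp
      then have "exp (-b*r) *\<^sub>R (exp (b*r) *\<^sub>R c b + (\<Sum>l\<in>A. exp (l*r) *\<^sub>R c l)) = 0" by simp
      moreover have "exp (-b*r) *\<^sub>R (exp (b*r) *\<^sub>R c b + (\<Sum>l\<in>A. exp (l*r) *\<^sub>R c l))
          = c b + (\<Sum>l\<in>A. exp ((l - b)*r) *\<^sub>R c l)"
        by (simp add: scaleR_add_right scaleR_sum_right exp_add[symmetric] algebra_simps
             flip: exp_add)
      ultimately show ?thesis by simp
    qed
    have lim: "((\<lambda>r. c b + (\<Sum>l\<in>A. exp ((l - b)*r) *\<^sub>R c l)) \<longlongrightarrow> c b + 0) at_top"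
    proof (intro tendsto_add tendsto_const tendsto_null_sum)
      fix l assume "l \<in> A"
      then have "l - b < 0" using insert by auto
      then have "((\<lambda>r. exp ((l - b)*r)) \<longlongrightarrow> 0) at_top" by (rule exp_neg_lim)
      then show "((\<lambda>r. exp ((l - b)*r) *\<^sub>R c l) \<longlongrightarrow> 0) at_top"
        using tendsto_scaleR[OF _ tendsto_const, of _ 0 at_top "c l"] by simp
    qed
    have "c b = 0"
    proof -
      have "((\<lambda>r. c b + (\<Sum>l\<in>A. exp ((l - b)*r) *\<^sub>R c l)) \<longlongrightarrow> 0) at_top"
        using H2 by simp
      with lim show ?thesis using tendsto_unique trivial_limit_at_top_linorder by fastforce
    qed
    then have "\<forall>r. (\<Sum>l\<in>A. exp (l*r) *\<^sub>R c l) = 0" using H bA insert.hyps(1) by simp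
    then have "\<forall>l\<in>A. c l = 0" using insert.IH by blast
    with \<open>c b = 0\<close> show "\<forall>l\<in>insert b A. c l = 0" by simp
  qed
qed

lemma generic_dir:
  fixes S :: "'d::finite cplx set"
  assumes "finite S"
  shows "\<exists>a. inj_on (\<lambda>s. a \<bullet> s) S"
proof -
  define F where "F = {{a. (s - t) \<bullet> a = 0} | s t. s \<in> S \<and> t \<in> S \<and> s \<noteq> t}"
  define B where "B = \<Union>F"
  have fin: "finite F"
  proof -
    have "F \<subseteq> (\<lambda>(s,t). {a. (s - t) \<bullet> a = 0}) ` (S \<times> S)" unfolding F_def by auto
    then show ?thesis using assms finite_subset by blast
  qed
  have "negligible B" unfolding B_def
    by (rule negligible_Union[OF fin]) (auto simp: F_def intro!: negligible_hyperplane)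
  then have "B \<noteq> UNIV" by auto
  then obtain a where a: "a \<notin> B" by blast
  have "inj_on (\<lambda>s. a \<bullet> s) S"
  proof (rule inj_onI)
    fix s t assume st: "s \<in> S" "t \<in> S" "a \<bullet> s = a \<bullet> t"
    show "s = t"
    proof (rule ccontr)
      assume "s \<noteq> t"
      moreover have "(s - t) \<bullet> a = 0" using st by (simp add: inner_diff_right inner_commute)
      ultimately have "a \<in> B" using st unfolding B_def F_def by blast
      with a show False by blast
    qed
  qed
  then show ?thesis by blast
qed

lemma monom_exp:
  "monom (\<chi> i. exp (a $ i * r)) s = exp ((a \<bullet> s) * r)"
proof -
  have "monom (\<chi> i. exp (a $ i * r)) s = (\<Prod>i\<in>UNIV. exp (a $ i * s $ i * r))"
    unfolding monom_def
    by (intro prod.cong refl) (auto simp: powr_def)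
  also have "\<dots> = exp (\<Sum>i\<in>UNIV. a $ i * s $ i * r)" by (simp add: exp_sum)
  also have "\<dots> = exp ((a \<bullet> s) * r)"
    by (simp add: inner_vec_def sum_distrib_right)
  finally show ?thesis .
qed

lemma monom_indep:
  fixes C :: "'d::finite cplx \<Rightarrow> 'a::real_normed_vector"
  assumes "finite S" "\<forall>x\<in>nonneg_orthant. (\<Sum>s\<in>S. monom x s *\<^sub>R C s) = 0"
  shows "\<forall>s\<in>S. C s = 0"
proof -
  obtain a where inj: "inj_on (\<lambda>s. a \<bullet> s) S" using generic_dir[OF assms(1)] by blast
  let ?f = "\<lambda>s. a \<bullet> s"
  define c where "c l = C (the_inv_into S ?f l)" for l
  have cf: "c (?f s) = C s" if "s \<in> S" for s
    using that inj by (simp add: c_def the_inv_into_f_f)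
  have "(\<Sum>l\<in>?f ` S. exp (l*r) *\<^sub>R c l) = 0" for r
  proof -
    have "(\<Sum>l\<in>?f ` S. exp (l*r) *\<^sub>R c l) = (\<Sum>s\<in>S. exp (?f s * r) *\<^sub>R c (?f s))"
      using inj by (simp add: sum.reindex)
    also have "\<dots> = (\<Sum>s\<in>S. monom (\<chi> i. exp (a $ i * r)) s *\<^sub>R C s)"
      by (intro sum.cong refl) (simp add: monom_exp cf)
    also have "\<dots> = 0"
      using assms(2) by (auto simp: nonneg_orthant_def less_imp_le)
    finally show ?thesis .
  qed
  then have "\<forall>l\<in>?f ` S. c l = 0" using exp_indep[of "?f ` S" c] assms(1) by blast
  then show ?thesis using cf by auto
qed

definition Wsum :: "'d::finite edge set \<Rightarrow> ('d edge \<Rightarrow> real) \<Rightarrow> 'd cplx \<Rightarrow> 'd cplx" where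
  "Wsum E K s = (\<Sum>e\<in>{e\<in>E. fst e = s}. K e *\<^sub>R (snd e - fst e))"

definition Vs :: "'d::finite edge set \<Rightarrow> 'd cplx \<Rightarrow> 'd cplx set" where
  "Vs E s = {snd e - fst e | e. e \<in> E \<and> fst e = s}"

lemma rn_finite: "reaction_network V E \<Longrightarrow> finite E"
  unfolding reaction_network_def using finite_subset[of E] by auto

lemma field_group:
  assumes "finite E" "finite T" "source_complexes E \<subseteq> T"
  shows "rn_field E K x = (\<Sum>s\<in>T. monom x s *\<^sub>R Wsum E K s)"
proof -
  have "rn_field E K x = (\<Sum>s\<in>T. \<Sum>e\<in>{e\<in>E. fst e = s}. (K e * monom x (fst e)) *\<^sub>R (snd e - fst e))"
    unfolding rn_field_def using assms
    by (intro sum.group[symmetric]) (auto simp: source_complexes_def)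
  also have "\<dots> = (\<Sum>s\<in>T. monom x s *\<^sub>R Wsum E K s)"
    unfolding Wsum_def scaleR_sum_right
    by (intro sum.cong refl) (auto simp: mult.commute)
  finally show ?thesis .
qed

lemma Wsum_not_sc: "s \<notin> source_complexes E \<Longrightarrow> Wsum E K s = 0"
proof -
  assume "s \<notin> source_complexes E"
  then have h: "{e\<in>E. fst e = s} = {}" by (force simp: source_complexes_def image_iff)
  show ?thesis unfolding Wsum_def h by (rule sum.empty)
qed

lemma Vs_image: "Vs E s = (\<lambda>e. snd e - fst e) ` {e\<in>E. fst e = s}"
  unfolding Vs_def by blast

lemma Vs_inj:
  fixes E :: "'d::finite edge set"
  shows "inj_on (\<lambda>e. snd e - fst e) {e\<in>E. fst e = s}"
proof (rule inj_onI)
  fix x y assume xy: "x \<in> {e\<in>E. fst e = s}" "y \<in> {e\<in>E. fst e = s}"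
    "snd x - fst x = snd y - fst y"
  then have 1: "fst x = fst y" by simp
  have "snd x = (snd x - fst x) + fst x" by simp
  also have "\<dots> = (snd y - fst y) + fst y" using xy(3) 1 by simp
  also have "\<dots> = snd y" by simp
  finally have "snd x = snd y" .
  with 1 show "x = y" by (simp add: prod_eq_iff)
qed

lemma Vs_finite: "finite E \<Longrightarrow> finite (Vs E s)"
  unfolding Vs_image by simp

lemma Wsum_reindex:
  "(\<Sum>v\<in>Vs E s. f v *\<^sub>R v) = Wsum E (\<lambda>e. f (snd e - fst e)) s"
  unfolding Vs_image Wsum_def by (subst sum.reindex[OF Vs_inj]) (simp add: comp_def)

lemma Wsum_cong:
  "(\<And>e. e \<in> E \<Longrightarrow> fst e = s \<Longrightarrow> K e = K' e) \<Longrightarrow> Wsum E K s = Wsum E K' s"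
  unfolding Wsum_def by (intro sum.cong) auto

lemma Wsum_in_pos_cone:
  assumes "pos_rates E K"
  shows "Wsum E K s \<in> pos_cone (Vs E s)"
proof -
  define f where "f v = K (s, v + s)" for v
  have "Wsum E K s = Wsum E (\<lambda>e. f (snd e - fst e)) s"
    by (rule Wsum_cong) (auto simp: f_def)
  also have "\<dots> = (\<Sum>v\<in>Vs E s. f v *\<^sub>R v)" by (simp add: Wsum_reindex)
  finally have "Wsum E K s = (\<Sum>v\<in>Vs E s. f v *\<^sub>R v)" .
  moreover have "\<forall>v\<in>Vs E s. f v > 0"
    using assms by (auto simp: Vs_def f_def pos_rates_def)
  ultimately show ?thesis unfolding pos_cone_def by blast
qed

lemma pos_cone_Wsum:
  assumes "w \<in> pos_cone (Vs E s)"
  shows "\<exists>K. pos_rates E K \<and> Wsum E K s = w"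
proof -
  obtain c where w: "w = (\<Sum>v\<in>Vs E s. c v *\<^sub>R v)" and c: "\<forall>v\<in>Vs E s. c v > 0"
    using assms unfolding pos_cone_def by blast
  define K where "K e = (if fst e = s then c (snd e - fst e) else 1)" for e
  have "Wsum E K s = Wsum E (\<lambda>e. c (snd e - fst e)) s"
    by (rule Wsum_cong) (auto simp: K_def)
  also have "\<dots> = w" by (simp add: w Wsum_reindex)
  finally have "Wsum E K s = w" .
  moreover have "pos_rates E K"
    using c by (auto simp: pos_rates_def K_def Vs_def)
  ultimately show ?thesis by blast
qed

lemma rel_interior_reaction_cone:
  assumes "finite E" "s \<in> source_complexes E"
  shows "rel_interior (reaction_cone E s) = pos_cone (Vs E s)"
proof -
  have "reaction_cone E s = nonneg_cone (Vs E s)"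
    using assms(2) unfolding reaction_cone_def Vs_def by (rule if_P)
  then show ?thesis using rel_interior_nonneg_cone[OF Vs_finite[OF assms(1)], of s] by (simp only:)
qed

lemma rel_interior_reaction_cone0:
  assumes "s \<notin> source_complexes E"
  shows "rel_interior (reaction_cone E s) = {0}"
proof -
  have "reaction_cone E s = {0}"
    using assms unfolding reaction_cone_def by (rule if_not_P)
  then show ?thesis by (simp only: rel_interior_sing)
qed

lemma field_eq_W:
  fixes E1 E2 :: "'d::finite edge set"
  assumes "finite E1" "finite E2"
    and "\<forall>x\<in>nonneg_orthant. rn_field E1 K1 x = rn_field E2 K2 x"
  shows "\<forall>s\<in>source_complexes E1 \<union> source_complexes E2. Wsum E1 K1 s = Wsum E2 K2 s"
proof -
  define T where "T = source_complexes E1 \<union> source_complexes E2"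
  have fT: "finite T" unfolding T_def source_complexes_def
    by (intro finite_UnI finite_imageI assms(1,2))
  have sub1: "source_complexes E1 \<subseteq> T" and sub2: "source_complexes E2 \<subseteq> T"
    by (auto simp: T_def)
  have "\<forall>x\<in>(nonneg_orthant::'d cplx set). (\<Sum>s\<in>T. monom x s *\<^sub>R (Wsum E1 K1 s - Wsum E2 K2 s)) = 0"
  proof
    fix x :: "'d cplx" assume x: "x \<in> nonneg_orthant"
    have h: "(\<Sum>s\<in>T. monom x s *\<^sub>R (Wsum E1 K1 s - Wsum E2 K2 s))
        = rn_field E1 K1 x - rn_field E2 K2 x"
      unfolding field_group[OF assms(1) fT sub1, of K1 x] field_group[OF assms(2) fT sub2, of K2 x]
        scaleR_diff_right sum_subtractf ..
    have e: "rn_field E1 K1 x = rn_field E2 K2 x" using assms(3) x by blast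
    show "(\<Sum>s\<in>T. monom x s *\<^sub>R (Wsum E1 K1 s - Wsum E2 K2 s)) = 0"
      by (simp only: h e diff_self)
  qed
  from monom_indep[OF fT this] show ?thesis unfolding T_def by (simp only: right_minus_eq)
qed

theorem theorem2:
  fixes V1 V2 :: "('d::finite) cplx set" and E1 E2 :: "'d edge set"
  assumes "reaction_network V1 E1" and "reaction_network V2 E2"
  shows "realizable_in E2 E1 \<longleftrightarrow>
     (source_complexes E2 \<subseteq> source_complexes E1 \<and>
      (\<forall>s\<in>source_complexes E1.
         rel_interior (reaction_cone E2 s) \<subseteq> rel_interior (reaction_cone E1 s)))"
proof -
  have f1: "finite E1" using assms(1) by (rule rn_finite)
  have f2: "finite E2" using assms(2) by (rule rn_finite)
  have noloop2: "\<forall>e\<in>E2. fst e \<noteq> snd e" using assms(2) unfolding reaction_network_def by blast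
  have key: "\<exists>K1. pos_rates E1 K1 \<and>
      (\<forall>s\<in>source_complexes E1 \<union> source_complexes E2. Wsum E1 K1 s = Wsum E2 K2 s)"
    if R: "realizable_in E2 E1" and K2: "pos_rates E2 K2" for K2
  proof -
    obtain K1 where K1: "pos_rates E1 K1"
      "\<forall>x\<in>nonneg_orthant. rn_field E1 K1 x = rn_field E2 K2 x"
      using R K2 unfolding realizable_in_def by blast
    show ?thesis using K1(1) field_eq_W[OF f1 f2 K1(2)] by blast
  qed
  show ?thesis
  proof
    assume R: "realizable_in E2 E1"
    have sc: "source_complexes E2 \<subseteq> source_complexes E1"
    proof
      fix s assume s2: "s \<in> source_complexes E2"
      show "s \<in> source_complexes E1"
      proof (rule ccontr)
        assume s1: "s \<notin> source_complexes E1"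
        obtain e0 where e0: "e0 \<in> E2" "fst e0 = s" using s2 by (auto simp: source_complexes_def)
        define Ka where "Ka = (\<lambda>e::'d edge. 1::real)"
        define Kb where "Kb = (\<lambda>e::'d edge. 1 + (if e = e0 then 1 else (0::real)))"
        have pa: "pos_rates E2 Ka" by (simp add: pos_rates_def Ka_def)
        have pb: "pos_rates E2 Kb" by (simp add: pos_rates_def Kb_def)
        obtain K1a where "\<forall>s\<in>source_complexes E1 \<union> source_complexes E2. Wsum E1 K1a s = Wsum E2 Ka s"
          using key[OF R pa] by blast
        then have "Wsum E1 K1a s = Wsum E2 Ka s" using s2 by blast
        then have a0: "Wsum E2 Ka s = 0" using Wsum_not_sc[OF s1, of K1a] by simp
        obtain K1b where "\<forall>s\<in>source_complexes E1 \<union> source_complexes E2. Wsum E1 K1b s = Wsum E2 Kb s"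
          using key[OF R pb] by blast
        then have "Wsum E1 K1b s = Wsum E2 Kb s" using s2 by blast
        then have b0: "Wsum E2 Kb s = 0" using Wsum_not_sc[OF s1, of K1b] by simp
        have "Wsum E2 Kb s = (\<Sum>e\<in>{e\<in>E2. fst e = s}. 1 *\<^sub>R (snd e - fst e)
                  + (if e = e0 then snd e - fst e else 0))"
          unfolding Wsum_def Kb_def by (intro sum.cong refl) (auto simp: scaleR_add_left)
        also have "\<dots> = Wsum E2 Ka s + (\<Sum>e\<in>{e\<in>E2. fst e = s}. if e = e0 then snd e - fst e else 0)"
          unfolding Wsum_def Ka_def sum.distrib ..
        also have "(\<Sum>e\<in>{e\<in>E2. fst e = s}. if e = e0 then snd e - fst e else 0) = snd e0 - fst e0"
          using e0 f2 by (simp add: sum.delta')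
        finally have "snd e0 - fst e0 = 0" using a0 b0 by simp
        then show False using noloop2 e0 by auto
      qed
    qed
    moreover have "\<forall>s\<in>source_complexes E1.
         rel_interior (reaction_cone E2 s) \<subseteq> rel_interior (reaction_cone E1 s)"
    proof (intro ballI subsetI)
      fix s w assume s1: "s \<in> source_complexes E1" and w: "w \<in> rel_interior (reaction_cone E2 s)"
      show "w \<in> rel_interior (reaction_cone E1 s)"
      proof (cases "s \<in> source_complexes E2")
        case True
        then have "w \<in> pos_cone (Vs E2 s)" using w rel_interior_reaction_cone[OF f2 True] by simp
        then obtain K2 where K2: "pos_rates E2 K2" "Wsum E2 K2 s = w" using pos_cone_Wsum by blast
        obtain K1 where K1: "pos_rates E1 K1"
            "\<forall>s\<in>source_complexes E1 \<union> source_complexes E2. Wsum E1 K1 s = Wsum E2 K2 s"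
          using key[OF R K2(1)] by blast
        have "Wsum E1 K1 s \<in> pos_cone (Vs E1 s)" by (rule Wsum_in_pos_cone[OF K1(1)])
        then have "w \<in> pos_cone (Vs E1 s)" using K1(2) K2(2) True by auto
        then show ?thesis using rel_interior_reaction_cone[OF f1 s1] by simp
      next
        case False
        then have w0: "w = 0" using w rel_interior_reaction_cone0[OF False] by simp
        have pa: "pos_rates E2 (\<lambda>e. 1)" by (simp add: pos_rates_def)
        obtain K1 where K1: "pos_rates E1 K1"
            "\<forall>s\<in>source_complexes E1 \<union> source_complexes E2. Wsum E1 K1 s = Wsum E2 (\<lambda>e. 1) s"
          using key[OF R pa] by blast
        have "Wsum E1 K1 s \<in> pos_cone (Vs E1 s)" by (rule Wsum_in_pos_cone[OF K1(1)])
        moreover have "Wsum E1 K1 s = 0" using K1(2) Wsum_not_sc[OF False] s1 by auto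
        ultimately show ?thesis using w0 rel_interior_reaction_cone[OF f1 s1] by simp
      qed
    qed
    ultimately show "source_complexes E2 \<subseteq> source_complexes E1 \<and>
      (\<forall>s\<in>source_complexes E1.
         rel_interior (reaction_cone E2 s) \<subseteq> rel_interior (reaction_cone E1 s))" by blast
  next
    assume H: "source_complexes E2 \<subseteq> source_complexes E1 \<and>
      (\<forall>s\<in>source_complexes E1.
         rel_interior (reaction_cone E2 s) \<subseteq> rel_interior (reaction_cone E1 s))"
    show "realizable_in E2 E1" unfolding realizable_in_def
    proof (intro allI impI)
      fix K2 assume K2: "pos_rates E2 K2"
      have "\<forall>s\<in>source_complexes E1. \<exists>c. (\<forall>v\<in>Vs E1 s. c v > 0) \<and>
                Wsum E2 K2 s = (\<Sum>v\<in>Vs E1 s. c v *\<^sub>R v)"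
      proof
        fix s assume s1: "s \<in> source_complexes E1"
        have "Wsum E2 K2 s \<in> rel_interior (reaction_cone E2 s)"
        proof (cases "s \<in> source_complexes E2")
          case True
          then show ?thesis using Wsum_in_pos_cone[OF K2] rel_interior_reaction_cone[OF f2 True] by simp
        next
          case False
          then show ?thesis using Wsum_not_sc[OF False] rel_interior_reaction_cone0[OF False] by simp
        qed
        then have "Wsum E2 K2 s \<in> pos_cone (Vs E1 s)"
          using H s1 rel_interior_reaction_cone[OF f1 s1] by blast
        then show "\<exists>c. (\<forall>v\<in>Vs E1 s. c v > 0) \<and> Wsum E2 K2 s = (\<Sum>v\<in>Vs E1 s. c v *\<^sub>R v)"
          unfolding pos_cone_def by blast
      qed
      then obtain c where c: "\<forall>s\<in>source_complexes E1. (\<forall>v\<in>Vs E1 s. c s v > 0) \<and>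
                Wsum E2 K2 s = (\<Sum>v\<in>Vs E1 s. c s v *\<^sub>R v)"
        by metis
      define K1 where "K1 e = c (fst e) (snd e - fst e)" for e
      have pK1: "pos_rates E1 K1"
        unfolding pos_rates_def
      proof
        fix e assume e: "e \<in> E1"
        have "fst e \<in> source_complexes E1" using e by (simp add: source_complexes_def)
        moreover have "snd e - fst e \<in> Vs E1 (fst e)" using e by (auto simp: Vs_def)
        ultimately show "K1 e > 0" using c by (simp add: K1_def)
      qed
      have W: "Wsum E1 K1 s = Wsum E2 K2 s" if s1: "s \<in> source_complexes E1" for s
      proof -
        have "Wsum E1 K1 s = Wsum E1 (\<lambda>e. c s (snd e - fst e)) s"
          by (rule Wsum_cong) (simp add: K1_def)
        also have "\<dots> = (\<Sum>v\<in>Vs E1 s. c s v *\<^sub>R v)" by (simp add: Wsum_reindex)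
        also have "\<dots> = Wsum E2 K2 s" using c s1 by simp
        finally show ?thesis .
      qed
      have finS: "finite (source_complexes E1)" using f1 by (simp add: source_complexes_def)
      have "rn_field E1 K1 x = rn_field E2 K2 x" for x
      proof -
        have "rn_field E1 K1 x = (\<Sum>s\<in>source_complexes E1. monom x s *\<^sub>R Wsum E1 K1 s)"
          by (rule field_group[OF f1 finS order_refl])
        also have "\<dots> = (\<Sum>s\<in>source_complexes E1. monom x s *\<^sub>R Wsum E2 K2 s)"
          by (intro sum.cong refl) (simp add: W)
        also have "\<dots> = rn_field E2 K2 x"
          using H by (intro field_group[OF f2 finS, symmetric]) blast
        finally show ?thesis .
      qed
      then show "\<exists>K1. pos_rates E1 K1 \<and> (\<forall>x\<in>nonneg_orthant. rn_field E1 K1 x = rn_field E2 K2 x)"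
        using pK1 by blast
    qed
  qed
qed

end
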